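(* Let $l$ be a prime and $(\mathcal{G}_n)_{n\in\mathbb{N}}$ a sequence of finite $l$-groups with $\mathcal{G}_n\le S_{l^n}$ and $\mathcal{G}_n\le\mathcal{G}_{n+1}$ for all $n$ (inside $S_\infty$, where $S_{l^n}$ is the subgroup fixing every integer $>l^n$). Let $\alpha\in\mathcal{G}_k$ be an element of order $l$ for some $k$, and $\mathcal{H}=\langle\alpha\rangle$. Let $d_n$ be the maximal order of a metacyclic subgroup of $\mathcal{G}_n$. Assume (1) $\lim_{n\to\infty}|\mathcal{G}_n|/d_n=\infty$, and (2) $\alpha$ has infinitely many conjugates in $\bigcup_{n}\mathcal{G}_n$. Then there is $N$ such that for every $n\ge N$ and every metacyclic subgroup $D\le\mathcal{G}_n$ one has $S(D,\mathcal{H})>1$, double cosets being taken in $\mathcal{G}_n$.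
   Context: $S_\infty$ is the group of permutations of $\mathbb{N}$ fixing all but finitely many elements. A group is metacyclic if it has a cyclic normal subgroup with cyclic quotient. For subgroups $A,B$ of a finite group $\mathcal{G}$, a double coset $AxB$ ($x\in\mathcal{G}$) is split if $|AxB|=|A||B|$ (equivalently $x^{-1}Ax\cap B=1$), and $S(A,B)$ denotes the number of distinct split double cosets. *)

theory Defs
  imports "HOL-Algebra.Sym_Groups" "HOL-Algebra.Elementary_Groups" "HOL-Algebra.Multiplicative_Group" "HOL-Analysis.Analysis"
begin

definition metacyclic :: "('a, 'b) monoid_scheme \<Rightarrow> bool" where
  "metacyclic G \<longleftrightarrow> (\<exists>N. N \<lhd> G \<and> cyclic_group (G\<lparr>carrier := N\<rparr>) \<and> cyclic_group (G Mod N))"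

definition double_coset :: "('a, 'b) monoid_scheme \<Rightarrow> 'a set \<Rightarrow> 'a \<Rightarrow> 'a set \<Rightarrow> 'a set" where
  "double_coset G A x B = {a \<otimes>\<^bsub>G\<^esub> x \<otimes>\<^bsub>G\<^esub> b | a b. a \<in> A \<and> b \<in> B}"

definition split_count :: "('a, 'b) monoid_scheme \<Rightarrow> 'a set \<Rightarrow> 'a set \<Rightarrow> nat" where
  "split_count G A B = card {double_coset G A x B | x. x \<in> carrier G \<and>
                              card (double_coset G A x B) = card A * card B}"

(* The finite symmetric group S_m inside S_infinity: permutations of {1..m}
   (the natural numbers are {1,2,...}; 0 is fixed and plays no role). *)
abbreviation Sym :: "nat \<Rightarrow> (nat \<Rightarrow> nat) monoid" where
  "Sym m \<equiv> sym_group m"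

abbreviation grp :: "nat \<Rightarrow> (nat \<Rightarrow> nat) set \<Rightarrow> (nat \<Rightarrow> nat) monoid" where
  "grp m C \<equiv> (sym_group m)\<lparr>carrier := C\<rparr>"

end

theory Submission
  imports Defs "HOL-Algebra.Group_Action"
begin

definition msupp :: "(nat \<Rightarrow> nat) \<Rightarrow> nat set" where "msupp p = {i. p i \<noteq> i}"

lemma perm_pow_id:
  assumes "bij p" "finite (msupp p)" "card (msupp p) \<le> r"
  shows "p ^^ fact (fact r) = id"
proof -
  let ?S = "msupp p"
  have pS: "p permutes ?S"
  proof (rule bij_imp_permutes)
    show "\<And>x. x \<notin> ?S \<Longrightarrow> p x = x" unfolding msupp_def by simp
    have "p ` ?S = ?S"
    proof
      show "p ` ?S \<subseteq> ?S" unfolding msupp_def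
        using bij_is_inj[OF assms(1)] by (auto dest: injD)
      show "?S \<subseteq> p ` ?S"
      proof
        fix y assume y: "y \<in> ?S"
        obtain x where x: "y = p x" using bij_is_surj[OF assms(1)] by (metis surjD)
        have "x \<in> ?S" using y x by (auto simp: msupp_def)
        then show "y \<in> p ` ?S" using x by blast
      qed
    qed
    then show "bij_betw p ?S ?S" using bij_is_inj[OF assms(1)]
      by (simp add: bij_betw_def inj_on_subset[OF _ subset_UNIV])
  qed
  let ?P = "{q. q permutes ?S}"
  have finP: "finite ?P" using assms(2) by (simp add: finite_permutations)
  have cP: "card ?P = fact (card ?S)" using assms(2) card_permutations by blast
  have img: "(\<lambda>i. p ^^ i) ` {0..card ?P} \<subseteq> ?P" using permutes_funpow[OF pS] by auto
  have "\<not> inj_on (\<lambda>i. p ^^ i) {0..card ?P}"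
  proof
    assume "inj_on (\<lambda>i. p ^^ i) {0..card ?P}"
    then have "card {0..card ?P} \<le> card ?P" using card_inj_on_le[OF _ img finP] by blast
    then show False by simp
  qed
  then obtain i j where ij: "i \<in> {0..card ?P}" "j \<in> {0..card ?P}" "i < j" "p ^^ i = p ^^ j"
    unfolding inj_on_def by (metis nat_neq_iff)
  have e: "p ^^ (j - i) = id"
  proof
    fix a show "(p ^^ (j - i)) a = id a"
      using funpow_diff[OF bij_is_inj[OF assms(1)], of i j a] ij by simp
  qed
  have "j - i \<le> fact r"
    using ij cP fact_mono[OF assms(3), where 'a=nat] by simp
  then have "(j - i) dvd fact (fact r)" using ij(3) by (intro dvd_fact) auto
  then obtain c where c: "fact (fact r) = (j - i) * c" by blast
  show ?thesis unfolding c funpow_mult[symmetric] e by simp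
qed

lemma pow_comp: "mult M = (\<circ>) \<Longrightarrow> one M = id \<Longrightarrow> x [^]\<^bsub>M\<^esub> (n::nat) = x ^^ n"
proof (induction n)
  case (Suc n) then show ?case by (simp add: funpow_swap1)
qed simp


lemma cyclic_roots:
  fixes Q (structure)
  assumes "group Q" "cyclic_group Q" "finite (carrier Q)" "0 < E"
  shows "card {c \<in> carrier Q. c [^] E = \<one>} \<le> E"
proof -
  interpret group Q by fact
  obtain x where x: "x \<in> carrier Q" "subgroup_generated Q {x} = Q"
    using assms(2) unfolding cyclic_group_def by blast
  have "carrier Q = generate Q {x}"
    using x by (metis carrier_subgroup_generated Int_absorb1 empty_subsetI insert_subset)
  also have "\<dots> = {x [^] k | k. k \<in> (UNIV :: nat set)}"
    using generate_pow_on_finite_carrier[OF assms(3) x(1)] .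
  also have "\<dots> = {x [^] k | k. k \<in> {0 .. ord x - 1}}"
    using ord_elems[OF assms(3) x(1)] .
  finally have car: "carrier Q = {x [^] k | k. k \<in> {0 .. ord x - 1}}" .
  let ?o = "ord x"
  have o1: "?o \<ge> 1" using ord_ge_1[OF assms(3) x(1)] .
  let ?K = "{k \<in> {0..?o - 1}. ?o dvd k * E}"
  have sub: "{c \<in> carrier Q. c [^] E = \<one>} \<subseteq> (\<lambda>k. x [^] k) ` ?K"
  proof
    fix c assume c: "c \<in> {c \<in> carrier Q. c [^] E = \<one>}"
    then have "c \<in> carrier Q" by simp
    then have "c \<in> {x [^] k | k. k \<in> {0 .. ord x - 1}}" by (simp only: car)
    then obtain k where k: "k \<in> {0..?o - 1}" "c = x [^] k" by blast
    have kk: "c [^] E = \<one>" using c by simp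
    have "x [^] (k * E) = \<one>" using x(1) kk k(2) by (simp add: nat_pow_pow)
    then have "?o dvd k * E" using pow_eq_id[OF x(1)] by simp
    then show "c \<in> (\<lambda>k. x [^] k) ` ?K" using k by auto
  qed
  have inj: "inj_on (\<lambda>k. k * E div ?o) ?K"
  proof (rule inj_onI)
    fix a b assume a: "a \<in> ?K" and b: "b \<in> ?K" and e: "a * E div ?o = b * E div ?o"
    have "a * E = a * E div ?o * ?o" using a by simp
    also have "\<dots> = b * E div ?o * ?o" using e by simp
    also have "\<dots> = b * E" using b by simp
    finally have "a * E = b * E" .
    then show "a = b" using assms(4) by simp
  qed
  have img: "(\<lambda>k. k * E div ?o) ` ?K \<subseteq> {..<E}"
  proof
    fix y assume "y \<in> (\<lambda>k. k * E div ?o) ` ?K"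
    then obtain k where k: "k \<in> ?K" "y = k * E div ?o" by blast
    have "k < ?o" using k o1 by auto
    then have "k * E < ?o * E" using assms(4) by simp
    then show "y \<in> {..<E}" using k o1
      by (simp add: div_less_iff_less_mult mult.commute)
  qed
  have "card ?K \<le> E" using card_inj_on_le[OF inj img] by simp
  have "card {c \<in> carrier Q. c [^] E = \<one>} \<le> card ((\<lambda>k. x [^] k) ` ?K)"
    by (rule card_mono[OF _ sub]) simp
  also have "\<dots> \<le> card ?K" by (rule card_image_le) simp
  finally show ?thesis using \<open>card ?K \<le> E\<close> by simp
qed

lemma msupp_comp: "msupp (f \<circ> g) \<subseteq> msupp f \<union> msupp g"
  unfolding msupp_def by auto

lemma meta_bound:
  fixes D :: "(nat \<Rightarrow> nat) set" and Y :: "(nat \<Rightarrow> nat) set"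
  assumes sub: "subgroup D (Sym m)" and mc: "metacyclic (grp m D)" and YD: "Y \<subseteq> D"
    and Ys: "\<forall>y\<in>Y. finite (msupp y) \<and> card (msupp y) \<le> sb"
  shows "card Y \<le> fact (fact (2 * sb)) * fact (fact (2 * sb))"
proof -
  define E :: nat where "E = fact (fact (2 * sb))"
  have E0: "0 < E" unfolding E_def by simp
  let ?D = "grp m D"
  have grpD: "group ?D" using group.subgroup_imp_group[OF sym_group_is_group sub] .
  interpret DD: group ?D by fact
  have Dperm: "\<And>y. y \<in> D \<Longrightarrow> bij y"
  proof -
    fix y assume "y \<in> D"
    then have "y permutes {1..m}" using subgroup.subset[OF sub] by (auto simp: sym_group_carrier)
    then show "bij y" by (rule permutes_bij)
  qed
  have finD: "finite D"
    using subgroup.subset[OF sub] finite_subset[OF _ finite_permutations[of "{1..m}"]]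
    by (simp add: sym_group_def)
  have multD: "mult ?D = (\<circ>)" "one ?D = id" by (simp_all add: sym_group_mult sym_group_one)
  have powid: "\<And>y. y \<in> D \<Longrightarrow> finite (msupp y) \<Longrightarrow> card (msupp y) \<le> 2 * sb \<Longrightarrow> y ^^ E = id"
    unfolding E_def using Dperm perm_pow_id by blast
  obtain N where N: "N \<lhd> ?D" "cyclic_group (?D\<lparr>carrier := N\<rparr>)" "cyclic_group (?D Mod N)"
    using mc unfolding metacyclic_def by blast
  interpret NN: normal N ?D by fact
  let ?Q = "?D Mod N"
  have grpQ: "group ?Q" using NN.factorgroup_is_group .
  have finQ: "finite (carrier ?Q)" unfolding carrier_FactGroup using finD by simp
  have NsubD: "N \<subseteq> D" using NN.subset by simp
  have grpN: "group (?D\<lparr>carrier := N\<rparr>)" using DD.subgroup_imp_group[OF NN.subgroup_axioms] .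
  have finN: "finite (carrier (?D\<lparr>carrier := N\<rparr>))" using finite_subset[OF NsubD finD] by simp
  define f where "f y = N #>\<^bsub>?D\<^esub> y" for y
  define R where "R = {c \<in> carrier ?Q. c [^]\<^bsub>?Q\<^esub> E = \<one>\<^bsub>?Q\<^esub>}"
  have cardR: "card R \<le> E" unfolding R_def using cyclic_roots[OF grpQ N(3) finQ E0] .
  define RN where "RN = {c \<in> carrier (?D\<lparr>carrier := N\<rparr>). c [^]\<^bsub>?D\<lparr>carrier := N\<rparr>\<^esub> E = \<one>\<^bsub>?D\<lparr>carrier := N\<rparr>\<^esub>}"
  have cardRN: "card RN \<le> E" unfolding RN_def using cyclic_roots[OF grpN N(2) finN E0] .
  have fY: "f ` Y \<subseteq> R"
  proof
    fix c assume "c \<in> f ` Y"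
    then obtain y where y: "y \<in> Y" "c = f y" by blast
    have yD: "y \<in> D" using y YD by blast
    have "y ^^ E = id" using powid[OF yD] Ys y(1) by force
    then have A: "y [^]\<^bsub>?D\<^esub> E = \<one>\<^bsub>?D\<^esub>" using pow_comp[OF multD] multD by simp
    have B: "f (y [^]\<^bsub>?D\<^esub> E) = f y [^]\<^bsub>?Q\<^esub> E"
      unfolding f_def using hom_nat_pow[OF NN.r_coset_hom_Mod _ grpD grpQ] yD by simp
    have C: "f \<one>\<^bsub>?D\<^esub> = \<one>\<^bsub>?Q\<^esub>"
    proof -
      have "N #>\<^bsub>?D\<^esub> \<one>\<^bsub>?D\<^esub> = N" by (rule DD.coset_mult_one[OF NN.subset])
      then show ?thesis by (simp only: f_def one_FactGroup)
    qed
    have Dc: "f y \<in> carrier ?Q" unfolding f_def carrier_FactGroup using yD by simp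
    have "f y [^]\<^bsub>?Q\<^esub> E = \<one>\<^bsub>?Q\<^esub>" by (metis A B C)
    then show "c \<in> R" unfolding R_def using Dc y(2) by blast
  qed
  have fib: "card {y \<in> Y. f y = c} \<le> E" if c: "c \<in> f ` Y" for c
  proof -
    obtain y0 where y0: "y0 \<in> Y" "f y0 = c" using c by blast
    have y0D: "y0 \<in> D" using y0 YD by blast
    let ?g = "\<lambda>y. y \<otimes>\<^bsub>?D\<^esub> inv\<^bsub>?D\<^esub> y0"
    have iD: "inv\<^bsub>?D\<^esub> y0 \<in> carrier ?D" using DD.inv_closed y0D by simp
    have inj: "inj_on ?g {y \<in> Y. f y = c}"
    proof (rule inj_onI)
      fix a b assume a: "a \<in> {y \<in> Y. f y = c}" and b: "b \<in> {y \<in> Y. f y = c}"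
        and e: "?g a = ?g b"
      have aD: "a \<in> carrier ?D" and bD: "b \<in> carrier ?D" using a b YD by auto
      show "a = b" using DD.right_cancel[OF iD aD bD] e by simp
    qed
    have img: "?g ` {y \<in> Y. f y = c} \<subseteq> RN"
    proof
      fix z assume "z \<in> ?g ` {y \<in> Y. f y = c}"
      then obtain y where y: "y \<in> Y" "f y = c" "z = ?g y" by blast
      have yD: "y \<in> D" using y YD by blast
      have "y \<in> N #>\<^bsub>?D\<^esub> y" using DD.rcos_self[OF _ NN.subgroup_axioms] yD by simp
      then have "y \<in> N #>\<^bsub>?D\<^esub> y0" using y y0 unfolding f_def by simp
      then have zN: "z \<in> N" using NN.rcos_module_imp[OF grpD _] y0D y(3) by simp
      define q where "q = inv\<^bsub>?D\<^esub> y0"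
      have "q \<otimes>\<^bsub>?D\<^esub> y0 = \<one>\<^bsub>?D\<^esub>" unfolding q_def using DD.l_inv[of y0] y0D by simp
      then have qy0: "q \<circ> y0 = id" using multD by simp
      have sq: "msupp q \<subseteq> msupp y0"
      proof
        fix i assume "i \<in> msupp q"
        show "i \<in> msupp y0"
        proof (rule ccontr)
          assume "i \<notin> msupp y0"
          then have "y0 i = i" unfolding msupp_def by simp
          then have "q i = i" using qy0 by (metis comp_apply id_apply)
          then show False using \<open>i \<in> msupp q\<close> unfolding msupp_def by simp
        qed
      qed
      have zq: "z = y \<circ> q" using y(3) multD unfolding q_def by simp
      have sz: "msupp z \<subseteq> msupp y \<union> msupp y0" using msupp_comp[of y q] sq zq by blast
      have fin: "finite (msupp z)" using sz Ys y(1) y0(1) finite_subset by blast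
      have "card (msupp z) \<le> card (msupp y \<union> msupp y0)"
        using sz Ys y(1) y0(1) by (intro card_mono) auto
      also have "\<dots> \<le> card (msupp y) + card (msupp y0)" by (rule card_Un_le)
      also have "\<dots> \<le> 2 * sb"
      proof -
        have "card (msupp y) \<le> sb" "card (msupp y0) \<le> sb" using Ys y(1) y0(1) by auto
        then show ?thesis by linarith
      qed
      finally have "card (msupp z) \<le> 2 * sb" .
      then have "z ^^ E = id" using powid zN NsubD fin by blast
      then show "z \<in> RN" unfolding RN_def using zN pow_comp[of "?D\<lparr>carrier := N\<rparr>"] multD
        by simp
    qed
    have "card {y \<in> Y. f y = c} \<le> card RN"
      using card_inj_on_le[OF inj img] finite_subset[OF _ finN] unfolding RN_def by auto
    then show ?thesis using cardRN by simp
  qed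
  have finY: "finite Y" using finite_subset[OF YD finD] .
  have eq: "Y = (\<Union>c\<in>f ` Y. {y \<in> Y. f y = c})" by auto
  have "card (\<Union>c\<in>f ` Y. {y \<in> Y. f y = c}) \<le> (\<Sum>c\<in>f ` Y. card {y \<in> Y. f y = c})"
    by (rule card_UN_le) (simp add: finY)
  then have "card Y \<le> (\<Sum>c\<in>f ` Y. card {y \<in> Y. f y = c})"
    by (simp only: eq[symmetric])
  also have "\<dots> \<le> (\<Sum>c\<in>f ` Y. E)" using fib by (intro sum_mono) auto
  also have "\<dots> = card (f ` Y) * E" by simp
  also have "\<dots> \<le> card R * E"
    using fY finite_subset[OF _ finQ] unfolding R_def
    by (intro mult_right_mono card_mono) auto
  also have "\<dots> \<le> E * E" using cardR by simp
  finally show ?thesis unfolding E_def .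
qed

lemma (in group) conj_pow:
  assumes "x \<in> carrier G" "h \<in> carrier G"
  shows "(x \<otimes> h \<otimes> inv x) [^] (j::nat) = x \<otimes> h [^] j \<otimes> inv x"
proof (induction j)
  case 0 then show ?case using assms by simp
next
  case (Suc j)
  have "(x \<otimes> h \<otimes> inv x) [^] Suc j = (x \<otimes> h [^] j \<otimes> inv x) \<otimes> (x \<otimes> h \<otimes> inv x)"
    using Suc by simp
  also have "\<dots> = x \<otimes> (h [^] j \<otimes> (inv x \<otimes> x) \<otimes> h) \<otimes> inv x"
  proof -
    have cancel: "\<And>y. y \<in> carrier G \<Longrightarrow> inv x \<otimes> (x \<otimes> y) = y"
      using assms by (simp add: m_assoc[symmetric])
    show ?thesis using assms by (simp add: m_assoc cancel)
  qed
  also have "\<dots> = x \<otimes> h [^] Suc j \<otimes> inv x" using assms by simp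
  finally show ?case .
qed

lemma (in group) prime_conj:
  assumes l: "prime (l::nat)" and a: "a \<in> carrier G" and al: "a [^] l = \<one>"
    and sD: "subgroup D G" and x: "x \<in> carrier G" and ai: "a [^] (i::nat) \<noteq> \<one>"
    and xD: "x \<otimes> a [^] i \<otimes> inv x \<in> D"
  shows "x \<otimes> a \<otimes> inv x \<in> D"
proof -
  have ndvd: "\<not> l dvd i"
  proof
    assume "l dvd i"
    then obtain q where "i = l * q" by blast
    then have "a [^] i = (a [^] l) [^] q" using a by (simp add: nat_pow_pow)
    then show False using ai al by simp
  qed
  then have i0: "i \<noteq> 0" by (metis dvd_0_right)
  have "coprime l i" using prime_imp_coprime[OF l ndvd] .
  then have g: "gcd i l = 1" by (simp add: coprime_iff_gcd_eq_1 gcd.commute)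
  obtain u v where uv: "i * u = l * v + gcd i l" using bezout_nat[OF i0] by blast
  have "(a [^] i) [^] u = a"
  proof -
    have "(a [^] i) [^] u = a [^] (l * v + 1)" using a uv g by (simp add: nat_pow_pow)
    also have "\<dots> = (a [^] l) [^] v \<otimes> a" using a by (simp add: nat_pow_mult nat_pow_pow)
    also have "\<dots> = a" using al a by simp
    finally show ?thesis .
  qed
  moreover have "(x \<otimes> a [^] i \<otimes> inv x) [^] u \<in> D"
  proof -
    have "\<And>n. (x \<otimes> a [^] i \<otimes> inv x) [^] (n::nat) \<in> D"
    proof -
      fix n show "(x \<otimes> a [^] i \<otimes> inv x) [^] (n::nat) \<in> D"
        by (induction n) (simp_all add: subgroup.one_closed[OF sD] subgroup.m_closed[OF sD] xD)
    qed
    then show ?thesis .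
  qed
  ultimately show ?thesis using conj_pow[OF x nat_pow_closed[OF a, of i], of u] by simp
qed

lemma (in group) cancel_l1: "x \<in> carrier G \<Longrightarrow> y \<in> carrier G \<Longrightarrow> inv x \<otimes> (x \<otimes> y) = y"
  by (simp add: m_assoc[symmetric])
lemma (in group) cancel_l2: "x \<in> carrier G \<Longrightarrow> y \<in> carrier G \<Longrightarrow> x \<otimes> (inv x \<otimes> y) = y"
  by (simp add: m_assoc[symmetric])

lemma (in group) bad_bound:
  assumes fin: "finite (carrier G)" and a: "a \<in> carrier G" and DG: "D \<subseteq> carrier G"
  shows "card {x \<in> carrier G. x \<otimes> a \<otimes> inv x \<in> D} * card {x \<otimes> a \<otimes> inv x | x. x \<in> carrier G}
     \<le> card ({x \<otimes> a \<otimes> inv x | x. x \<in> carrier G} \<inter> D) * card (carrier G)"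
proof -
  define Ob where "Ob = {x \<otimes> a \<otimes> inv x | x. x \<in> carrier G}"
  define Z where "Z = {g \<in> carrier G. g \<otimes> a \<otimes> inv g = a}"
  let ?phi = "\<lambda>g. (\<lambda>h \<in> carrier G. g \<otimes> h \<otimes> (inv g))"
  have "card (orbit G ?phi a) * card (stabilizer G ?phi a) = card (carrier G)"
    using group_action.orbit_stabilizer_theorem[OF action_by_conjugation a] by (simp add: Coset.order_def)
  moreover have "orbit G ?phi a = Ob" unfolding orbit_def Ob_def using a by auto
  moreover have "stabilizer G ?phi a = Z" unfolding stabilizer_def Z_def using a by auto
  ultimately have oz: "card Ob * card Z = card (carrier G)" by simp
  define F where "F t = {x \<in> carrier G. x \<otimes> a \<otimes> inv x = t}" for t
  have finZ: "finite Z" unfolding Z_def using fin by simp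
  have Fb: "card (F t) \<le> card Z" if t: "t \<in> Ob" for t
  proof -
    obtain x0 where x0: "x0 \<in> carrier G" "t = x0 \<otimes> a \<otimes> inv x0" using t unfolding Ob_def by blast
    have inj: "inj_on (\<lambda>x. inv x0 \<otimes> x) (F t)"
      by (rule inj_onI) (use x0 in \<open>auto simp: F_def\<close>)
    have img: "(\<lambda>x. inv x0 \<otimes> x) ` (F t) \<subseteq> Z"
    proof
      fix z assume "z \<in> (\<lambda>x. inv x0 \<otimes> x) ` (F t)"
      then obtain x where x: "x \<in> carrier G" "x \<otimes> a \<otimes> inv x = t" "z = inv x0 \<otimes> x"
        unfolding F_def by blast
      have "z \<otimes> a \<otimes> inv z = inv x0 \<otimes> (x \<otimes> a \<otimes> inv x) \<otimes> x0"
        using x(1,3) x0(1) a by (simp add: inv_mult_group m_assoc)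
      also have "\<dots> = a" using x(2) x0 a by (simp add: m_assoc cancel_l1)
      finally show "z \<in> Z" unfolding Z_def using x x0 by simp
    qed
    show ?thesis using card_inj_on_le[OF inj img finZ] .
  qed
  have eq: "{x \<in> carrier G. x \<otimes> a \<otimes> inv x \<in> D} = (\<Union>t\<in>Ob \<inter> D. F t)"
    unfolding Ob_def F_def by auto
  have finOb: "finite Ob" unfolding Ob_def using fin by simp
  have "card (\<Union>t\<in>Ob \<inter> D. F t) \<le> (\<Sum>t\<in>Ob \<inter> D. card (F t))"
    by (rule card_UN_le) (simp add: finOb)
  also have "\<dots> \<le> (\<Sum>t\<in>Ob \<inter> D. card Z)" using Fb by (intro sum_mono) auto
  also have "\<dots> = card (Ob \<inter> D) * card Z" by simp
  finally have "card {x \<in> carrier G. x \<otimes> a \<otimes> inv x \<in> D} \<le> card (Ob \<inter> D) * card Z"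
    by (simp only: eq)
  then have "card {x \<in> carrier G. x \<otimes> a \<otimes> inv x \<in> D} * card Ob \<le> card (Ob \<inter> D) * card Z * card Ob"
    by (rule mult_right_mono) simp
  also have "\<dots> = card (Ob \<inter> D) * card (carrier G)" using oz by (simp add: mult.assoc mult.commute)
  finally show ?thesis unfolding Ob_def .
qed

lemma (in group) split_card:
  assumes sD: "subgroup D G" and sH: "subgroup H G" and x: "x \<in> carrier G"
    and nb: "\<forall>h\<in>H. h \<noteq> \<one> \<longrightarrow> x \<otimes> h \<otimes> inv x \<notin> D"
    and fin: "finite (carrier G)"
  shows "card (double_coset G D x H) = card D * card H"
proof -
  have DG: "D \<subseteq> carrier G" and HG: "H \<subseteq> carrier G" using sD sH subgroup.subset by auto
  have eq: "double_coset G D x H = (\<lambda>(a, b). a \<otimes> x \<otimes> b) ` (D \<times> H)"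
    unfolding double_coset_def by auto
  have inj: "inj_on (\<lambda>(a, b). a \<otimes> x \<otimes> b) (D \<times> H)"
  proof (rule inj_onI, clarify)
    fix a b a' b' assume a: "a \<in> D" and b: "b \<in> H" and a': "a' \<in> D" and b': "b' \<in> H"
      and e: "a \<otimes> x \<otimes> b = a' \<otimes> x \<otimes> b'"
    have ac: "a \<in> carrier G" "a' \<in> carrier G" using a a' DG by auto
    have bc: "b \<in> carrier G" "b' \<in> carrier G" using b b' HG by auto
    define h where "h = b' \<otimes> inv b"
    have hH: "h \<in> H" unfolding h_def using b b' sH
      by (simp add: subgroup.m_closed subgroup.m_inv_closed)
    have hc: "h \<in> carrier G" using hH HG by auto
    have "x \<otimes> h \<otimes> inv x = inv a' \<otimes> a"
    proof -
      have "inv a' \<otimes> (a \<otimes> x \<otimes> b) \<otimes> inv b \<otimes> inv x = inv a' \<otimes> (a' \<otimes> x \<otimes> b') \<otimes> inv b \<otimes> inv x"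
        using e by simp
      moreover have "inv a' \<otimes> (a \<otimes> x \<otimes> b) \<otimes> inv b \<otimes> inv x = inv a' \<otimes> a"
        using ac bc x by (simp add: m_assoc)
      moreover have "inv a' \<otimes> (a' \<otimes> x \<otimes> b') \<otimes> inv b \<otimes> inv x = x \<otimes> h \<otimes> inv x"
        using ac bc x unfolding h_def by (simp add: m_assoc cancel_l1)
      ultimately show ?thesis by simp
    qed
    also have "\<dots> \<in> D" using a a' sD by (simp add: subgroup.m_closed subgroup.m_inv_closed)
    finally have "h = \<one>" using nb hH by blast
    moreover have "b' = h \<otimes> b" unfolding h_def using bc by (simp add: m_assoc)
    ultimately have bb: "b' = b" using bc by simp
    then have "a \<otimes> x = a' \<otimes> x" using e ac bc x by simp
    then have "a = a'" using ac x by simp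
    then show "a = a' \<and> b = b'" using bb by simp
  qed
  have "card (double_coset G D x H) = card (D \<times> H)"
    unfolding eq by (rule card_image[OF inj])
  then show ?thesis by (simp add: card_cartesian_product)
qed

lemma (in group) two_split:
  assumes fin: "finite (carrier G)" and sD: "subgroup D G" and sH: "subgroup H G"
    and cnt: "card {x \<in> carrier G. \<exists>h\<in>H. h \<noteq> \<one> \<and> x \<otimes> h \<otimes> inv x \<in> D} + card D * card H
               < card (carrier G)"
  shows "split_count G D H \<ge> 2"
proof -
  define Bad where "Bad = {x \<in> carrier G. \<exists>h\<in>H. h \<noteq> \<one> \<and> x \<otimes> h \<otimes> inv x \<in> D}"
  have DG: "D \<subseteq> carrier G" and HG: "H \<subseteq> carrier G" using sD sH subgroup.subset by auto
  have spl: "card (double_coset G D x H) = card D * card H" if "x \<in> carrier G" "x \<notin> Bad" for x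
    using split_card[OF sD sH that(1) _ fin] that unfolding Bad_def by blast
  have "card Bad < card (carrier G)" using cnt unfolding Bad_def by simp
  moreover have finB: "finite Bad" unfolding Bad_def using fin by simp
  ultimately have "\<not> carrier G \<subseteq> Bad" using card_mono[OF finB] by (meson not_le)
  then obtain x1 where x1: "x1 \<in> carrier G" "x1 \<notin> Bad" by blast
  define C1 where "C1 = double_coset G D x1 H"
  have cC1: "card C1 = card D * card H" unfolding C1_def using spl x1 by blast
  have "card (Bad \<union> C1) \<le> card Bad + card C1" by (rule card_Un_le)
  then have "card (Bad \<union> C1) < card (carrier G)" using cnt cC1 unfolding Bad_def by simp
  moreover have "finite C1"
  proof -
    have "C1 = (\<lambda>(a, b). a \<otimes> x1 \<otimes> b) ` (D \<times> H)" unfolding C1_def double_coset_def by auto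
    moreover have "finite D" "finite H" using DG HG fin finite_subset by auto
    ultimately show ?thesis by simp
  qed
  then have finBC: "finite (Bad \<union> C1)" using finB by simp
  ultimately have "\<not> carrier G \<subseteq> Bad \<union> C1" using card_mono[OF finBC] by (meson not_le)
  then obtain x2 where x2: "x2 \<in> carrier G" "x2 \<notin> Bad" "x2 \<notin> C1" by blast
  define C2 where "C2 = double_coset G D x2 H"
  have "x2 \<in> C2" unfolding C2_def double_coset_def
  proof -
    have "x2 = \<one> \<otimes> x2 \<otimes> \<one>" using x2(1) by simp
    then show "x2 \<in> {a \<otimes> x2 \<otimes> b |a b. a \<in> D \<and> b \<in> H}"
      using subgroup.one_closed[OF sD] subgroup.one_closed[OF sH] by blast
  qed
  then have ne: "C1 \<noteq> C2" using x2 by blast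
  define S where "S = {double_coset G D x H | x. x \<in> carrier G \<and>
                              card (double_coset G D x H) = card D * card H}"
  have sub: "{C1, C2} \<subseteq> S" unfolding S_def C1_def C2_def using x1 x2 spl by blast
  have finS: "finite S"
  proof -
    have "S \<subseteq> (\<lambda>x. double_coset G D x H) ` carrier G" unfolding S_def by blast
    then show ?thesis using fin finite_subset by blast
  qed
  have "2 = card {C1, C2}" using ne by simp
  also have "\<dots> \<le> card S" by (rule card_mono[OF finS sub])
  finally show ?thesis unfolding split_count_def S_def .
qed


lemma inv_grp:
  assumes "group (grp m C)" "C \<subseteq> carrier (Sym m)" "p \<in> C"
  shows "inv\<^bsub>grp m C\<^esub> p = inv' p"
proof -
  interpret GG: group "grp m C" by fact
  have pc: "p \<in> carrier (grp m C)" using assms(3) by simp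
  have "inv\<^bsub>grp m C\<^esub> p \<otimes>\<^bsub>grp m C\<^esub> p = \<one>\<^bsub>grp m C\<^esub>" using GG.l_inv[OF pc] .
  then have 1: "inv\<^bsub>grp m C\<^esub> p \<circ> p = id" by (simp add: sym_group_mult sym_group_one)
  have "p \<otimes>\<^bsub>grp m C\<^esub> inv\<^bsub>grp m C\<^esub> p = \<one>\<^bsub>grp m C\<^esub>" using GG.r_inv[OF pc] .
  then have 2: "p \<circ> inv\<^bsub>grp m C\<^esub> p = id" by (simp add: sym_group_mult sym_group_one)
  show ?thesis using inv_unique_comp[OF 2 1] by simp
qed

lemma subgroup_to_sym:
  assumes gC: "group (grp m C)" and Cs: "C \<subseteq> carrier (Sym m)" and sD: "subgroup D (grp m C)"
  shows "subgroup D (Sym m)"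
proof (rule subgroup.intro)
  have DC: "D \<subseteq> C" using subgroup.subset[OF sD] by simp
  show "D \<subseteq> carrier (Sym m)" using DC Cs by blast
  show "\<And>x y. x \<in> D \<Longrightarrow> y \<in> D \<Longrightarrow> x \<otimes>\<^bsub>Sym m\<^esub> y \<in> D"
    using subgroup.m_closed[OF sD] by (simp add: sym_group_mult)
  show "\<one>\<^bsub>Sym m\<^esub> \<in> D" using subgroup.one_closed[OF sD] by (simp add: sym_group_one)
  show "\<And>x. x \<in> D \<Longrightarrow> inv\<^bsub>Sym m\<^esub> x \<in> D"
  proof -
    fix x assume x: "x \<in> D"
    have "inv\<^bsub>Sym m\<^esub> x = inv' x" using x DC Cs by (intro sym_group_inv_equality) blast
    also have "\<dots> = inv\<^bsub>grp m C\<^esub> x" using inv_grp[OF gC Cs] x DC by auto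
    finally show "inv\<^bsub>Sym m\<^esub> x \<in> D" using subgroup.m_inv_closed[OF sD x] by simp
  qed
qed

lemma msupp_conj:
  assumes "bij g"
  shows "msupp (g \<circ> a \<circ> inv' g) \<subseteq> g ` msupp a"
proof
  fix i assume i: "i \<in> msupp (g \<circ> a \<circ> inv' g)"
  have gi: "g (inv' g i) = i" using surj_f_inv_f[OF bij_is_surj[OF assms]] .
  have "a (inv' g i) \<noteq> inv' g i"
  proof
    assume "a (inv' g i) = inv' g i"
    then have "(g \<circ> a \<circ> inv' g) i = i" using gi by simp
    then show False using i unfolding msupp_def by simp
  qed
  then have "inv' g i \<in> msupp a" unfolding msupp_def by simp
  then show "i \<in> g ` msupp a" using gi by (metis imageI)
qed

theorem mainTheorem13:
  fixes l :: nat and G :: "nat \<Rightarrow> (nat \<Rightarrow> nat) set" and \<alpha> :: "nat \<Rightarrow> nat" and k :: nat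
    and d :: "nat \<Rightarrow> nat"
  assumes l_prime: "prime l"
    and G_sub: "\<And>n. subgroup (G n) (Sym (l ^ n))"
    and G_lgroup: "\<And>n. \<exists>e. card (G n) = l ^ e"
    and G_mono: "\<And>n. G n \<subseteq> G (Suc n)"
    and alpha_in: "\<alpha> \<in> G k"
    and alpha_ord: "group.ord (grp (l ^ k) (G k)) \<alpha> = l"
    and d_def: "\<And>n. d n = Max {card D | D. subgroup D (grp (l ^ n) (G n)) \<and>
                                             metacyclic (grp (l ^ n) D)}"
    and lim: "filterlim (\<lambda>n. real (card (G n)) / real (d n)) at_top sequentially"
    and conj_inf: "infinite {g \<circ> \<alpha> \<circ> Hilbert_Choice.inv g | g. g \<in> (\<Union>n. G n)}"
  shows "\<exists>N. \<forall>n\<ge>N. \<forall>D. subgroup D (grp (l ^ n) (G n)) \<and> metacyclic (grp (l ^ n) D) \<longrightarrow>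
           split_count (grp (l ^ n) (G n)) D
             (carrier (subgroup_generated (grp (l ^ k) (G k)) {\<alpha>})) > 1"
  proof -
  define Gr where "Gr n = grp (l ^ n) (G n)" for n
  have grpn: "\<And>n. group (Gr n)" unfolding Gr_def
    using group.subgroup_imp_group[OF sym_group_is_group G_sub] .
  have Gcar: "\<And>n. G n \<subseteq> carrier (Sym (l ^ n))" using G_sub subgroup.subset by blast
  have finG: "\<And>n. finite (G n)"
  proof -
    fix n show "finite (G n)"
      using Gcar[of n] finite_subset[OF _ finite_permutations[of "{1..l^n}"]]
      by (simp add: sym_group_def)
  qed
  have Gmono: "\<And>n n'. n \<le> n' \<Longrightarrow> G n \<subseteq> G n'"
    using lift_Suc_mono_le[of G, OF G_mono] by blast
  have multG: "\<And>n. mult (Gr n) = (\<circ>)" "\<And>n. one (Gr n) = id"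
    unfolding Gr_def by (simp_all add: sym_group_mult sym_group_one)
  have carG: "\<And>n. carrier (Gr n) = G n" unfolding Gr_def by simp
  have bijG: "\<And>n g. g \<in> G n \<Longrightarrow> bij g"
  proof -
    fix n g assume "g \<in> G n"
    then have "g permutes {1..l^n}" using Gcar[of n] by (auto simp: sym_group_carrier)
    then show "bij g" by (rule permutes_bij)
  qed
  define Hs where "Hs = carrier (subgroup_generated (grp (l ^ k) (G k)) {\<alpha>})"
  have Hpow: "Hs = {\<alpha> ^^ i | i. i \<in> (UNIV :: nat set)}"
  proof -
    have "Hs = generate (Gr k) {\<alpha>}"
      unfolding Hs_def Gr_def carrier_subgroup_generated using alpha_in by simp
    also have "\<dots> = {\<alpha> [^]\<^bsub>Gr k\<^esub> i | i. i \<in> (UNIV :: nat set)}"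
      using group.generate_pow_on_finite_carrier[OF grpn[of k]] finG[of k] alpha_in carG[of k] by simp
    finally show ?thesis using pow_comp[OF multG(1)[of k] multG(2)[of k]] by simp
  qed
  have HGk: "Hs \<subseteq> G k"
  proof
    fix h assume "h \<in> Hs"
    then obtain i where "h = \<alpha> ^^ i" using Hpow by auto
    then have "h = \<alpha> [^]\<^bsub>Gr k\<^esub> i" using pow_comp[OF multG(1)[of k] multG(2)[of k]] by simp
    then show "h \<in> G k"
      using monoid.nat_pow_closed[OF group.is_monoid[OF grpn[of k]]] alpha_in carG by simp
  qed
  have al_l: "\<alpha> ^^ l = id"
  proof -
    have "\<alpha> [^]\<^bsub>Gr k\<^esub> group.ord (Gr k) \<alpha> = \<one>\<^bsub>Gr k\<^esub>"
      using group.pow_ord_eq_1[OF grpn[of k]] alpha_in carG by simp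
    then show ?thesis using alpha_ord pow_comp[OF multG(1)[of k] multG(2)[of k]] multG(2)
      unfolding Gr_def by simp
  qed
  have sH: "\<And>n. k \<le> n \<Longrightarrow> subgroup Hs (Gr n)"
  proof -
    fix n assume kn: "k \<le> n"
    have an: "\<alpha> \<in> G n" using Gmono[OF kn] alpha_in by blast
    have "generate (Gr n) {\<alpha>} = {\<alpha> [^]\<^bsub>Gr n\<^esub> i | i. i \<in> (UNIV :: nat set)}"
      using group.generate_pow_on_finite_carrier[OF grpn[of n]] finG[of n] an carG[of n] by simp
    also have "\<dots> = Hs" using Hpow pow_comp[OF multG(1)[of n] multG(2)[of n]] by simp
    finally have eq: "generate (Gr n) {\<alpha>} = Hs" .
    have "{\<alpha>} \<subseteq> carrier (Gr n)" using an carG by simp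
    then have "subgroup (generate (Gr n) {\<alpha>}) (Gr n)" by (rule group.generate_is_subgroup[OF grpn])
    then show "subgroup Hs (Gr n)" by (simp only: eq)
  qed
  define s where "s = card (msupp \<alpha>)"
  have finsa: "finite (msupp \<alpha>)"
  proof -
    have "\<alpha> permutes {1..l^k}" using alpha_in Gcar[of k] by (auto simp: sym_group_carrier)
    then have "msupp \<alpha> \<subseteq> {1..l^k}" unfolding msupp_def permutes_def by blast
    then show ?thesis using finite_subset by blast
  qed
  define K where "K n = {g \<circ> \<alpha> \<circ> Hilbert_Choice.inv g | g. g \<in> G n}" for n
  have Ksupp: "\<And>n t. t \<in> K n \<Longrightarrow> finite (msupp t) \<and> card (msupp t) \<le> s"
  proof -
    fix n t assume "t \<in> K n"
    then obtain g where g: "g \<in> G n" "t = g \<circ> \<alpha> \<circ> Hilbert_Choice.inv g" unfolding K_def by blast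
    have sub: "msupp t \<subseteq> g ` msupp \<alpha>" using msupp_conj[OF bijG[OF g(1)]] g(2) by simp
    have "finite (msupp t)" using sub finsa finite_subset by blast
    moreover have "card (msupp t) \<le> card (g ` msupp \<alpha>)" using sub finsa by (intro card_mono) auto
    moreover have "card (g ` msupp \<alpha>) \<le> s" unfolding s_def by (rule card_image_le[OF finsa])
    ultimately show "finite (msupp t) \<and> card (msupp t) \<le> s" by simp
  qed
  have Kmono: "\<And>n n'. n \<le> n' \<Longrightarrow> K n \<subseteq> K n'" unfolding K_def using Gmono by blast
  have finK: "\<And>n. finite (K n)" unfolding K_def using finG by simp
  have Kbig: "\<And>M. \<exists>n. M < card (K n)"
  proof (rule ccontr)
    fix M assume "\<not> (\<exists>n. M < card (K n))"
    then have bnd: "\<And>n. card (K n) \<le> M" by (simp add: not_less)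
    define U where "U = {g \<circ> \<alpha> \<circ> Hilbert_Choice.inv g | g. g \<in> (\<Union>n. G n)}"
    have infU: "infinite U" using conj_inf unfolding U_def .
    obtain F where F: "finite F" "card F = Suc M" "F \<subseteq> U"
      using infinite_arbitrarily_large[OF infU] by blast
    have "\<forall>f\<in>F. \<exists>n. f \<in> K n" using F(3) unfolding U_def K_def by blast
    from bchoice[OF this] obtain \<nu> where \<nu>: "\<forall>f\<in>F. f \<in> K (\<nu> f)" by blast
    define N where "N = Max (insert 0 (\<nu> ` F))"
    have "\<forall>f\<in>F. \<nu> f \<le> N" unfolding N_def using F(1) by simp
    then have "F \<subseteq> K N" using \<nu> Kmono by blast
    then have "card F \<le> card (K N)" using finK by (intro card_mono) auto
    then show False using bnd[of N] F(2) by simp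
  qed
  define E :: nat where "E = fact (fact (2 * s))"
  define c where "c = E * E"
  obtain N0 where N0: "2 * c < card (K N0)" using Kbig by blast
  have "\<forall>\<^sub>F n in sequentially. real (2 * card (G k) + 1) \<le> real (card (G n)) / real (d n)"
    using lim[unfolded filterlim_at_top] by (rule allE)
  then obtain N1 where N1: "\<And>n. n \<ge> N1 \<Longrightarrow> real (2 * card (G k) + 1) \<le> real (card (G n)) / real (d n)"
    unfolding eventually_sequentially by blast
  show ?thesis
  proof (intro exI allI impI)
    fix n D
    assume nN: "max (max N0 N1) k \<le> n"
      and DD: "subgroup D (grp (l ^ n) (G n)) \<and> metacyclic (grp (l ^ n) D)"
    have kn: "k \<le> n" and n0: "N0 \<le> n" and n1: "N1 \<le> n" using nN by auto
    have sD: "subgroup D (Gr n)" using DD unfolding Gr_def by simp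
    have mD: "metacyclic (grp (l ^ n) D)" using DD by simp
    interpret GN: group "Gr n" by (rule grpn)
    have an: "\<alpha> \<in> G n" using Gmono[OF kn] alpha_in by blast
    have finGn: "finite (carrier (Gr n))" using finG carG by simp
    have DGn: "D \<subseteq> G n" using subgroup.subset[OF sD] carG by simp
    have orb: "{x \<otimes>\<^bsub>Gr n\<^esub> \<alpha> \<otimes>\<^bsub>Gr n\<^esub> inv\<^bsub>Gr n\<^esub> x | x. x \<in> carrier (Gr n)} = K n"
    proof -
      have "\<And>x. x \<in> G n \<Longrightarrow> x \<otimes>\<^bsub>Gr n\<^esub> \<alpha> \<otimes>\<^bsub>Gr n\<^esub> inv\<^bsub>Gr n\<^esub> x = x \<circ> \<alpha> \<circ> Hilbert_Choice.inv x"
        using inv_grp[where m="l^n" and C="G n"] grpn Gcar multG unfolding Gr_def by simp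
      note ce = this
      show ?thesis unfolding K_def carG
      proof (intro equalityI subsetI)
        fix y assume "y \<in> {x \<otimes>\<^bsub>Gr n\<^esub> \<alpha> \<otimes>\<^bsub>Gr n\<^esub> inv\<^bsub>Gr n\<^esub> x | x. x \<in> G n}"
        then obtain x where x: "x \<in> G n" "y = x \<otimes>\<^bsub>Gr n\<^esub> \<alpha> \<otimes>\<^bsub>Gr n\<^esub> inv\<^bsub>Gr n\<^esub> x" by blast
        then have "y = x \<circ> \<alpha> \<circ> Hilbert_Choice.inv x" using ce by simp
        then show "y \<in> {g \<circ> \<alpha> \<circ> Hilbert_Choice.inv g | g. g \<in> G n}" using x(1) by blast
      next
        fix y assume "y \<in> {g \<circ> \<alpha> \<circ> Hilbert_Choice.inv g | g. g \<in> G n}"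
        then obtain x where x: "x \<in> G n" "y = x \<circ> \<alpha> \<circ> Hilbert_Choice.inv x" by blast
        then have "y = x \<otimes>\<^bsub>Gr n\<^esub> \<alpha> \<otimes>\<^bsub>Gr n\<^esub> inv\<^bsub>Gr n\<^esub> x" using ce by simp
        then show "y \<in> {x \<otimes>\<^bsub>Gr n\<^esub> \<alpha> \<otimes>\<^bsub>Gr n\<^esub> inv\<^bsub>Gr n\<^esub> x | x. x \<in> G n}" using x(1) by blast
      qed
    qed
    have cK: "2 * c < card (K n)" using N0 card_mono[OF finK Kmono[OF n0]] by simp
    have cT: "card (K n \<inter> D) \<le> c"
    proof -
      have "subgroup D (Sym (l ^ n))"
        using subgroup_to_sym[where m="l^n" and C="G n" and D=D] grpn Gcar sD unfolding Gr_def by blast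
      moreover have "\<forall>y\<in>K n \<inter> D. finite (msupp y) \<and> card (msupp y) \<le> s" using Ksupp by blast
      ultimately show ?thesis using meta_bound[OF _ mD, of "K n \<inter> D" s] unfolding c_def E_def by blast
    qed
    define Bad0 where "Bad0 = {x \<in> carrier (Gr n). x \<otimes>\<^bsub>Gr n\<^esub> \<alpha> \<otimes>\<^bsub>Gr n\<^esub> inv\<^bsub>Gr n\<^esub> x \<in> D}"
    define Bad where "Bad = {x \<in> carrier (Gr n). \<exists>h\<in>Hs. h \<noteq> \<one>\<^bsub>Gr n\<^esub> \<and> x \<otimes>\<^bsub>Gr n\<^esub> h \<otimes>\<^bsub>Gr n\<^esub> inv\<^bsub>Gr n\<^esub> x \<in> D}"
    have bb: "card Bad0 * card (K n) \<le> card (K n \<inter> D) * card (carrier (Gr n))"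
    proof -
      have anc: "\<alpha> \<in> carrier (Gr n)" using an carG by simp
      have DGc: "D \<subseteq> carrier (Gr n)" using DGn carG by simp
      show ?thesis using GN.bad_bound[OF finGn anc DGc] unfolding orb Bad0_def .
    qed
    have al_ln: "\<alpha> [^]\<^bsub>Gr n\<^esub> l = \<one>\<^bsub>Gr n\<^esub>"
      using al_l pow_comp[OF multG(1)[of n] multG(2)[of n]] multG(2) by simp
    have BadSub: "Bad \<subseteq> Bad0"
    proof
      fix x assume "x \<in> Bad"
      then obtain h where x: "x \<in> carrier (Gr n)" and h: "h \<in> Hs" "h \<noteq> \<one>\<^bsub>Gr n\<^esub>"
        and hD: "x \<otimes>\<^bsub>Gr n\<^esub> h \<otimes>\<^bsub>Gr n\<^esub> inv\<^bsub>Gr n\<^esub> x \<in> D" unfolding Bad_def by blast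
      obtain i where i: "h = \<alpha> [^]\<^bsub>Gr n\<^esub> (i::nat)"
        using h(1) Hpow pow_comp[OF multG(1)[of n] multG(2)[of n]] by auto
      have "x \<otimes>\<^bsub>Gr n\<^esub> \<alpha> \<otimes>\<^bsub>Gr n\<^esub> inv\<^bsub>Gr n\<^esub> x \<in> D"
        using GN.prime_conj[OF l_prime _ al_ln sD x, of i] an carG h(2) hD i by simp
      then show "x \<in> Bad0" unfolding Bad0_def using x by simp
    qed
    have finBad0: "finite Bad0" unfolding Bad0_def using finGn by simp
    have cB: "card Bad \<le> card Bad0" by (rule card_mono[OF finBad0 BadSub])
    have gpos: "0 < card (carrier (Gr n))" using finGn an carG card_gt_0_iff by blast
    have "card (K n \<inter> D) * card (carrier (Gr n)) \<le> c * card (carrier (Gr n))"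
      using cT by (rule mult_right_mono) simp
    then have "card Bad0 * card (K n) \<le> c * card (carrier (Gr n))" using bb by linarith
    then have "card Bad0 * card (K n) * 2 \<le> c * card (carrier (Gr n)) * 2" by simp
    also have "\<dots> < card (K n) * card (carrier (Gr n))"
      using cK gpos by (simp add: mult.commute)
    finally have "2 * card Bad0 * card (K n) < card (carrier (Gr n)) * card (K n)"
      by (simp add: mult.commute mult.left_commute)
    then have B2: "2 * card Bad0 < card (carrier (Gr n))" by (rule mult_less_cancel2[THEN iffD1, THEN conjunct2])
    have finDs: "finite {card D | D. subgroup D (grp (l ^ n) (G n)) \<and> metacyclic (grp (l ^ n) D)}"
    proof -
      have "{card D | D. subgroup D (grp (l ^ n) (G n)) \<and> metacyclic (grp (l ^ n) D)} \<subseteq> {0..card (G n)}"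
      proof
        fix y assume "y \<in> {card D | D. subgroup D (grp (l ^ n) (G n)) \<and> metacyclic (grp (l ^ n) D)}"
        then obtain D' where "y = card D'" "subgroup D' (grp (l ^ n) (G n))" by blast
        moreover then have "D' \<subseteq> G n" using subgroup.subset by fastforce
        ultimately show "y \<in> {0..card (G n)}" using card_mono[OF finG] by auto
      qed
      then show ?thesis using finite_subset by blast
    qed
    have Dd: "card D \<le> d n" unfolding d_def[of n] using DD by (intro Max_ge[OF finDs]) blast
    have D1: "1 \<le> card D"
    proof -
      have "\<one>\<^bsub>Gr n\<^esub> \<in> D" using subgroup.one_closed[OF sD] .
      moreover have "finite D" using DGn finG finite_subset by blast
      ultimately have "0 < card D" using card_gt_0_iff by blast
      then show ?thesis by simp
    qed
    have dpos: "0 < d n" using D1 Dd by simp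
    have "real (2 * card (G k) + 1) * real (d n) \<le> real (card (G n))"
      using N1[OF n1] dpos by (simp add: pos_le_divide_eq)
    then have "(2 * card (G k) + 1) * d n \<le> card (G n)" by (simp only: of_nat_mult[symmetric] of_nat_le_iff)
    moreover have "(2 * card (G k) + 1) * card D \<le> (2 * card (G k) + 1) * d n" using Dd by (rule mult_left_mono) simp
    ultimately have DB: "2 * card (G k) * card D + card D \<le> card (G n)" by (simp add: algebra_simps)
    have "card Hs \<le> card (G k)" using card_mono[OF finG HGk] .
    then have X: "card D * card Hs \<le> card D * card (G k)" by (rule mult_left_mono) simp
    have DH: "2 * (card D * card Hs) < card (carrier (Gr n))"
    proof -
      have "card (carrier (Gr n)) = card (G n)" using carG by simp
      moreover have "2 * card (G k) * card D = 2 * (card D * card (G k))" by simp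
      ultimately show ?thesis using X DB D1 by linarith
    qed
    have "card Bad + card D * card Hs < card (carrier (Gr n))" using DH B2 cB by linarith
    then have "split_count (Gr n) D Hs \<ge> 2"
      using GN.two_split[OF finGn sD sH[OF kn]] unfolding Bad_def by blast
    then show "split_count (grp (l ^ n) (G n)) D
             (carrier (subgroup_generated (grp (l ^ k) (G k)) {\<alpha>})) > 1"
      unfolding Gr_def Hs_def by simp
  qed
qed

end
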